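(* Let $R$ be a unital associative ring. For $M\in M_3(R)$: if $M\in{\cal S}$ then $J_2(M)\in{\cal S}$; and if $M\in{\cal S}$ then all square submatrices of $M^{-1}$ are invertible. Furthermore, $${\rm dom}(J)\cap{\rm dom}(J^{-1})={\cal S}\quad\text{and}\quad{\rm dom}(\Phi)\cap{\rm dom}(\Phi^{-1})=\widehat{\cal S}.$$
   Context: $R^*$: units of $R$. $M_3^*(R)$: invertible $3\times3$ matrices; $M_3^\star(R)$: matrices with all entries in $R^*$. $J_1(M)=M^{-1}$ on $M_3^*(R)$; $J_2(M)_{jk}=(M_{kj})^{-1}$ on $M_3^\star(R)$; $J=J_2\circ J_1$, $J^{-1}=J_1\circ J_2$, where $g\circ f$ has domain $\{x\in{\rm dom}(f):f(x)\in{\rm dom}(g)\}$. $\widehat M_3(R)$: matrices whose first row and column consist of $1$'s. For $A=\{a_{j,k}\}\in M_3^\star(R)$: $\Lambda^L(A)_{j,k}=a_{1,1}a_{j,1}^{-1}a_{j,k}a_{1,k}^{-1}$, $\Lambda^R(A)_{j,k}=a_{j,1}^{-1}a_{j,k}a_{1,k}^{-1}a_{1,1}$. $\Phi(A)=J_2(\Lambda^L(A^{-1}))$ with ${\rm dom}(\Phi)={\rm dom}(J)\cap\widehat M_3(R)\cap M_3^\star(R)$; $\Phi^{-1}(A)=\Lambda^R(J^{-1}(A))$ with domain $\widehat M_3(R)\cap\{M\in{\rm dom}(J^{-1}):J^{-1}(M)\in M_3^\star(R)\}$. ${\cal S}=\{M\in M_3(R):$ all square submatrices of $M$ are invertible and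 $J_2(M)$ is invertible$\}$, $\widehat{\cal S}={\cal S}\cap\widehat M_3(R)$. *)

theory Defs
  imports "HOL-Analysis.Analysis"
begin

definition is_runit :: "'a::ring_1 \<Rightarrow> bool" where
  "is_runit a \<longleftrightarrow> (\<exists>b. a * b = 1 \<and> b * a = 1)"

definition rinv :: "'a::ring_1 \<Rightarrow> 'a" where
  "rinv a = (THE b. a * b = 1 \<and> b * a = 1)"

type_synonym 'a mat3 = "'a ^ 3 ^ 3"

definition submatrix_invertible :: "'a::ring_1 mat3 \<Rightarrow> 3 set \<Rightarrow> 3 set \<Rightarrow> bool" where
  "submatrix_invertible M I J \<longleftrightarrow>
     (\<exists>N :: 3 \<Rightarrow> 3 \<Rightarrow> 'a.
        (\<forall>i\<in>I. \<forall>i'\<in>I. (\<Sum>j\<in>J. M $ i $ j * N j i') = (if i = i' then 1 else 0)) \<and>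
        (\<forall>j\<in>J. \<forall>j'\<in>J. (\<Sum>i\<in>I. N j i * M $ i $ j') = (if j = j' then 1 else 0)))"

definition all_square_submatrices_invertible :: "'a::ring_1 mat3 \<Rightarrow> bool" where
  "all_square_submatrices_invertible M \<longleftrightarrow>
     (\<forall>I J. I \<noteq> {} \<and> card I = card J \<longrightarrow> submatrix_invertible M I J)"

text \<open>M_3^*(R): invertible matrices; M_3^star(R): matrices with all entries units.\<close>
definition Minv3 :: "'a::ring_1 mat3 set" where
  "Minv3 = {M. invertible M}"

definition Mstar3 :: "'a::ring_1 mat3 set" where
  "Mstar3 = {M. \<forall>j k. is_runit (M $ j $ k)}"

definition Mhat3 :: "'a::ring_1 mat3 set" where
  "Mhat3 = {M. \<forall>k. M $ 0 $ k = 1 \<and> M $ k $ 0 = 1}"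

definition J1 :: "'a::ring_1 mat3 \<Rightarrow> 'a mat3 option" where
  "J1 M = (if M \<in> Minv3 then Some (matrix_inv M) else None)"

definition J2 :: "'a::ring_1 mat3 \<Rightarrow> 'a mat3 option" where
  "J2 M = (if M \<in> Mstar3 then Some (\<chi> j k. rinv (M $ k $ j)) else None)"

definition JJ :: "'a::ring_1 mat3 \<Rightarrow> 'a mat3 option" where
  "JJ = J2 \<circ>\<^sub>m J1"

definition JJinv :: "'a::ring_1 mat3 \<Rightarrow> 'a mat3 option" where
  "JJinv = J1 \<circ>\<^sub>m J2"

definition LamL :: "'a::ring_1 mat3 \<Rightarrow> 'a mat3" where
  "LamL A = (\<chi> j k. A $ 0 $ 0 * rinv (A $ j $ 0) * A $ j $ k * rinv (A $ 0 $ k))"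

definition LamR :: "'a::ring_1 mat3 \<Rightarrow> 'a mat3" where
  "LamR A = (\<chi> j k. rinv (A $ j $ 0) * A $ j $ k * rinv (A $ 0 $ k) * A $ 0 $ 0)"

definition Phi :: "'a::ring_1 mat3 \<Rightarrow> 'a mat3 option" where
  "Phi A = (if A \<in> dom JJ \<inter> Mhat3 \<inter> Mstar3 then J2 (LamL (matrix_inv A)) else None)"

definition Phiinv :: "'a::ring_1 mat3 \<Rightarrow> 'a mat3 option" where
  "Phiinv A = (if A \<in> Mhat3 \<and> A \<in> dom JJinv \<and> the (JJinv A) \<in> Mstar3
               then Some (LamR (the (JJinv A))) else None)"

definition SS :: "'a::ring_1 mat3 set" where
  "SS = {M. all_square_submatrices_invertible M \<and> (\<exists>N. J2 M = Some N \<and> invertible N)}"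

definition SShat :: "'a::ring_1 mat3 set" where
  "SShat = SS \<inter> Mhat3"

end

theory Submission
  imports Defs
begin


lemma schur_gen:
  fixes M :: "'i::finite \<Rightarrow> 'j::finite \<Rightarrow> 'a::ring_1" and N X :: "'j \<Rightarrow> 'i \<Rightarrow> 'a"
  assumes MN: "\<And>i i'. (\<Sum>j\<in>UNIV. M i j * N j i') = (if i = i' then 1 else 0)"
  and NM: "\<And>j j'. (\<Sum>i\<in>UNIV. N j i * M i j') = (if j = j' then 1 else 0)"
  and X1: "\<And>i i'. i\<in>I \<Longrightarrow> i'\<in>I \<Longrightarrow> (\<Sum>j\<in>J. M i j * X j i') = (if i = i' then 1 else 0)"
  and X2: "\<And>j j'. j\<in>J \<Longrightarrow> j'\<in>J \<Longrightarrow> (\<Sum>i\<in>I. X j i * M i j') = (if j = j' then 1 else 0)"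
  shows "\<exists>S. (\<forall>j\<in>-J. \<forall>j'\<in>-J. (\<Sum>i\<in>-I. N j i * S i j') = (if j = j' then 1 else 0)) \<and>
             (\<forall>i\<in>-I. \<forall>i'\<in>-I. (\<Sum>j\<in>-J. S i j * N j i') = (if i = i' then 1 else 0))"
proof -
  define S where "S i j' = M i j' - (\<Sum>a\<in>J. \<Sum>b\<in>I. M i a * (X a b * M b j'))" for i j'
  have splitJ: "(\<Sum>j\<in>UNIV. f j) = (\<Sum>j\<in>J. f j) + (\<Sum>j\<in>-J. f j)" for f :: "'j \<Rightarrow> 'a"
  proof -
    have "(UNIV::'j set) = J \<union> -J" by auto
    then have "(\<Sum>j\<in>UNIV. f j) = (\<Sum>j\<in>J \<union> -J. f j)" by simp
    also have "\<dots> = (\<Sum>j\<in>J. f j) + (\<Sum>j\<in>-J. f j)" by (rule sum.union_disjoint) auto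
    finally show ?thesis .
  qed
  have splitI: "(\<Sum>i\<in>UNIV. f i) = (\<Sum>i\<in>I. f i) + (\<Sum>i\<in>-I. f i)" for f :: "'i \<Rightarrow> 'a"
  proof -
    have "(UNIV::'i set) = I \<union> -I" by auto
    then have "(\<Sum>i\<in>UNIV. f i) = (\<Sum>i\<in>I \<union> -I. f i)" by simp
    also have "\<dots> = (\<Sum>i\<in>I. f i) + (\<Sum>i\<in>-I. f i)" by (rule sum.union_disjoint) auto
    finally show ?thesis .
  qed
  have part2: "(\<Sum>j\<in>-J. S i j * N j i') = (if i = i' then 1 else 0)" if i: "i \<in> -I" and i': "i' \<in> -I" for i i'
  proof -
    have F1: "(\<Sum>j\<in>-J. M b j * N j i') = - (\<Sum>j\<in>J. M b j * N j i')" if "b \<in> I" for b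
    proof -
      have "b \<noteq> i'" using that i' by auto
      then have "(\<Sum>j\<in>J. M b j * N j i') + (\<Sum>j\<in>-J. M b j * N j i') = 0"
        using MN[of b i'] splitJ[of "\<lambda>j. M b j * N j i'"] by simp
      then show ?thesis by (metis add.commute eq_neg_iff_add_eq_0)
    qed
    have F2: "(\<Sum>b\<in>I. X a b * (\<Sum>j\<in>J. M b j * N j i')) = N a i'" if a: "a \<in> J" for a
    proof -
      have "(\<Sum>b\<in>I. X a b * (\<Sum>j\<in>J. M b j * N j i')) = (\<Sum>b\<in>I. \<Sum>j\<in>J. X a b * (M b j * N j i'))"
        by (simp add: sum_distrib_left)
      also have "\<dots> = (\<Sum>j\<in>J. \<Sum>b\<in>I. X a b * (M b j * N j i'))" by (rule sum.swap)
      also have "\<dots> = (\<Sum>j\<in>J. (\<Sum>b\<in>I. X a b * M b j) * N j i')"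
        by (simp add: sum_distrib_right mult.assoc)
      also have "\<dots> = (\<Sum>j\<in>J. (if a = j then 1 else 0) * N j i')"
        using X2 a by simp
      also have "\<dots> = (\<Sum>j\<in>J. if a = j then N j i' else 0)" by (rule sum.cong) auto
      also have "\<dots> = N a i'" using a by (simp add: sum.delta)
      finally show ?thesis .
    qed
    have "(\<Sum>j\<in>-J. S i j * N j i') = (\<Sum>j\<in>-J. M i j * N j i') - (\<Sum>j\<in>-J. (\<Sum>a\<in>J. \<Sum>b\<in>I. M i a * (X a b * M b j)) * N j i')"
      by (simp add: S_def left_diff_distrib sum_subtractf)
    also have "(\<Sum>j\<in>-J. (\<Sum>a\<in>J. \<Sum>b\<in>I. M i a * (X a b * M b j)) * N j i') =
       (\<Sum>a\<in>J. M i a * (\<Sum>b\<in>I. X a b * (\<Sum>j\<in>-J. M b j * N j i')))"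
    proof -
      have "(\<Sum>j\<in>-J. (\<Sum>a\<in>J. \<Sum>b\<in>I. M i a * (X a b * M b j)) * N j i') =
            (\<Sum>j\<in>-J. \<Sum>a\<in>J. \<Sum>b\<in>I. M i a * (X a b * (M b j * N j i')))"
        by (simp add: sum_distrib_right mult.assoc)
      also have "\<dots> = (\<Sum>a\<in>J. \<Sum>b\<in>I. \<Sum>j\<in>-J. M i a * (X a b * (M b j * N j i')))"
        by (rule trans[OF sum.swap], rule sum.cong[OF refl], rule sum.swap)
      also have "\<dots> = (\<Sum>a\<in>J. M i a * (\<Sum>b\<in>I. X a b * (\<Sum>j\<in>-J. M b j * N j i')))"
        by (simp add: sum_distrib_left)
      finally show ?thesis .
    qed
    also have "\<dots> = - (\<Sum>a\<in>J. M i a * N a i')"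
    proof -
      have G: "(\<Sum>b\<in>I. X a b * (\<Sum>j\<in>-J. M b j * N j i')) = - N a i'" if a: "a \<in> J" for a
      proof -
        have "(\<Sum>b\<in>I. X a b * (\<Sum>j\<in>-J. M b j * N j i')) = (\<Sum>b\<in>I. - (X a b * (\<Sum>j\<in>J. M b j * N j i')))"
          by (rule sum.cong[OF refl]) (subst F1, assumption, simp)
        also have "\<dots> = - (\<Sum>b\<in>I. X a b * (\<Sum>j\<in>J. M b j * N j i'))" by (rule sum_negf)
        also have "\<dots> = - N a i'" using F2[OF a] by simp
        finally show ?thesis .
      qed
      have "(\<Sum>a\<in>J. M i a * (\<Sum>b\<in>I. X a b * (\<Sum>j\<in>-J. M b j * N j i'))) = (\<Sum>a\<in>J. - (M i a * N a i'))"
        by (rule sum.cong[OF refl]) (simp add: G)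
      also have "\<dots> = - (\<Sum>a\<in>J. M i a * N a i')" by (rule sum_negf)
      finally show ?thesis .
    qed
    also have "(\<Sum>j\<in>-J. M i j * N j i') - - (\<Sum>a\<in>J. M i a * N a i') = (\<Sum>j\<in>UNIV. M i j * N j i')"
      using splitJ[of "\<lambda>j. M i j * N j i'"] by (simp add: add.commute)
    finally show ?thesis using MN by simp
  qed
  have part1: "(\<Sum>i\<in>-I. N j i * S i j') = (if j = j' then 1 else 0)" if j: "j \<in> -J" and j': "j' \<in> -J" for j j'
  proof -
    have F1: "(\<Sum>i\<in>-I. N j i * M i b) = - (\<Sum>i\<in>I. N j i * M i b)" if "b \<in> J" for b
    proof -
      have "j \<noteq> b" using that j by auto
      then have "(\<Sum>i\<in>I. N j i * M i b) + (\<Sum>i\<in>-I. N j i * M i b) = 0"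
        using NM[of j b] splitI[of "\<lambda>i. N j i * M i b"] by simp
      then show ?thesis by (metis add.commute eq_neg_iff_add_eq_0)
    qed
    have F2: "(\<Sum>a\<in>J. (\<Sum>i\<in>I. N j i * M i a) * X a b) = N j b" if b: "b \<in> I" for b
    proof -
      have "(\<Sum>a\<in>J. (\<Sum>i\<in>I. N j i * M i a) * X a b) = (\<Sum>a\<in>J. \<Sum>i\<in>I. N j i * (M i a * X a b))"
        by (simp add: sum_distrib_right mult.assoc)
      also have "\<dots> = (\<Sum>i\<in>I. \<Sum>a\<in>J. N j i * (M i a * X a b))" by (rule sum.swap)
      also have "\<dots> = (\<Sum>i\<in>I. N j i * (\<Sum>a\<in>J. M i a * X a b))"
        by (simp add: sum_distrib_left)
      also have "\<dots> = (\<Sum>i\<in>I. N j i * (if i = b then 1 else 0))"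
        using X1 b by simp
      also have "\<dots> = (\<Sum>i\<in>I. if i = b then N j i else 0)" by (rule sum.cong) auto
      also have "\<dots> = N j b" using b by (simp add: sum.delta')
      finally show ?thesis .
    qed
    have "(\<Sum>i\<in>-I. N j i * S i j') = (\<Sum>i\<in>-I. N j i * M i j') - (\<Sum>i\<in>-I. N j i * (\<Sum>a\<in>J. \<Sum>b\<in>I. M i a * (X a b * M b j')))"
      by (simp add: S_def right_diff_distrib sum_subtractf)
    also have "(\<Sum>i\<in>-I. N j i * (\<Sum>a\<in>J. \<Sum>b\<in>I. M i a * (X a b * M b j'))) =
       (\<Sum>b\<in>I. (\<Sum>a\<in>J. (\<Sum>i\<in>-I. N j i * M i a) * X a b) * M b j')"
    proof -
      have "(\<Sum>i\<in>-I. N j i * (\<Sum>a\<in>J. \<Sum>b\<in>I. M i a * (X a b * M b j'))) =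
            (\<Sum>i\<in>-I. \<Sum>a\<in>J. \<Sum>b\<in>I. N j i * (M i a * (X a b * M b j')))"
        by (simp add: sum_distrib_left)
      also have "\<dots> = (\<Sum>a\<in>J. \<Sum>b\<in>I. \<Sum>i\<in>-I. N j i * (M i a * (X a b * M b j')))"
        by (rule trans[OF sum.swap], rule sum.cong[OF refl], rule sum.swap)
      also have "\<dots> = (\<Sum>b\<in>I. \<Sum>a\<in>J. \<Sum>i\<in>-I. N j i * (M i a * (X a b * M b j')))"
        by (rule sum.swap)
      also have "\<dots> = (\<Sum>b\<in>I. (\<Sum>a\<in>J. (\<Sum>i\<in>-I. N j i * M i a) * X a b) * M b j')"
        by (simp add: sum_distrib_right mult.assoc)
      finally show ?thesis .
    qed
    also have "\<dots> = - (\<Sum>b\<in>I. N j b * M b j')"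
    proof -
      have G: "(\<Sum>a\<in>J. (\<Sum>i\<in>-I. N j i * M i a) * X a b) = - N j b" if b: "b \<in> I" for b
      proof -
        have "(\<Sum>a\<in>J. (\<Sum>i\<in>-I. N j i * M i a) * X a b) = (\<Sum>a\<in>J. - ((\<Sum>i\<in>I. N j i * M i a) * X a b))"
          by (rule sum.cong[OF refl]) (subst F1, assumption, simp)
        also have "\<dots> = - (\<Sum>a\<in>J. (\<Sum>i\<in>I. N j i * M i a) * X a b)" by (rule sum_negf)
        also have "\<dots> = - N j b" using F2[OF b] by simp
        finally show ?thesis .
      qed
      have "(\<Sum>b\<in>I. (\<Sum>a\<in>J. (\<Sum>i\<in>-I. N j i * M i a) * X a b) * M b j') = (\<Sum>b\<in>I. - (N j b * M b j'))"
        by (rule sum.cong[OF refl]) (simp add: G)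
      also have "\<dots> = - (\<Sum>b\<in>I. N j b * M b j')" by (rule sum_negf)
      finally show ?thesis .
    qed
    also have "(\<Sum>i\<in>-I. N j i * M i j') - - (\<Sum>b\<in>I. N j b * M b j') = (\<Sum>i\<in>UNIV. N j i * M i j')"
      using splitI[of "\<lambda>i. N j i * M i j'"] by (simp add: add.commute)
    finally show ?thesis using NM by simp
  qed
  show ?thesis using part1 part2 by blast
qed



lemma runit_inv: assumes "a * b = 1" "b * a = 1" shows "is_runit a" "rinv a = b"
proof -
  show "is_runit a" using assms unfolding is_runit_def by blast
  show "rinv a = b" unfolding rinv_def
  proof (rule the_equality)
    fix c assume c: "a * c = 1 \<and> c * a = 1"
    have "c = (b * a) * c" using assms by simp
    also have "\<dots> = b" using c by (simp add: mult.assoc)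
    finally show "c = b" .
  qed (use assms in auto)
qed

lemma runitD: assumes "is_runit a" shows "a * rinv a = 1" "rinv a * a = 1"
  using assms runit_inv unfolding is_runit_def by metis+

lemma runit_rinv: "is_runit a \<Longrightarrow> is_runit (rinv a)" and rinv_rinv: "is_runit a \<Longrightarrow> rinv (rinv a) = a"
  using runitD runit_inv by metis+

lemma runit_mult: assumes "is_runit a" "is_runit b" shows "is_runit (a * b)"
proof -
  have "(a * b) * (rinv b * rinv a) = 1" using runitD[OF assms(1)] runitD[OF assms(2)]
    by (metis mult.assoc mult_1_right)
  moreover have "(rinv b * rinv a) * (a * b) = 1" using runitD[OF assms(1)] runitD[OF assms(2)]
    by (metis mult.assoc mult_1_left)
  ultimately show ?thesis using runit_inv by blast
qed

lemma runit_neg: "is_runit a \<Longrightarrow> is_runit (- a)"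
  using runitD runit_inv[of "-a" "- rinv a"] by auto

definition inv2 :: "'a::ring_1 \<Rightarrow> 'a \<Rightarrow> 'a \<Rightarrow> 'a \<Rightarrow> bool" where
  "inv2 a b c d \<longleftrightarrow> (\<exists>p q r s. a * p + b * r = 1 \<and> a * q + b * s = 0 \<and> c * p + d * r = 0 \<and> c * q + d * s = 1 \<and>
      p * a + q * c = 1 \<and> p * b + q * d = 0 \<and> r * a + s * c = 0 \<and> r * b + s * d = 1)"

lemma inv2_swap: "inv2 a b c d \<Longrightarrow> inv2 d c b a"
  unfolding inv2_def by (metis add.commute)

lemma schur2_imp: assumes "a * a' = 1" "a' * a = 1" "inv2 a b c d" shows "is_runit (d - c * a' * b)"
proof -
  obtain p q r s where e: "a * p + b * r = 1" "a * q + b * s = 0" "c * p + d * r = 0" "c * q + d * s = 1"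
      "p * a + q * c = 1" "p * b + q * d = 0" "r * a + s * c = 0" "r * b + s * d = 1" using assms(3) unfolding inv2_def by blast
  have q: "q = - (a' * b * s)"
  proof -
    have "q = a' * (a * q)" using assms by (simp add: mult.assoc[symmetric])
    also have "\<dots> = a' * (a * q + b * s) - a' * (b * s)" by (simp add: distrib_left)
    also have "\<dots> = - (a' * b * s)" using e(2) by (simp add: mult.assoc)
    finally show ?thesis .
  qed
  have r: "r = - (s * c * a')"
  proof -
    have "r = (r * a) * a'" using assms by (simp add: mult.assoc)
    also have "\<dots> = (r * a + s * c) * a' - (s * c) * a'" by (simp add: distrib_right)
    also have "\<dots> = - (s * c * a')" using e(7) by simp
    finally show ?thesis .
  qed
  have "(d - c * a' * b) * s = d * s - c * (a' * b * s)" by (simp add: left_diff_distrib mult.assoc)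
  also have "\<dots> = c * q + d * s" using q by (simp add: algebra_simps)
  finally have 1: "(d - c * a' * b) * s = 1" using e(4) by simp
  have "s * (d - c * a' * b) = s * d - (s * c * a') * b" by (simp add: right_diff_distrib mult.assoc)
  also have "\<dots> = r * b + s * d" using r by (simp add: algebra_simps)
  finally have 2: "s * (d - c * a' * b) = 1" using e(8) by simp
  show ?thesis using 1 2 runit_inv by blast
qed

lemma schur2_rev: assumes a: "a * a' = 1" "a' * a = 1" and u: "is_runit (d - c * a' * b)" shows "inv2 a b c d"
proof -
  define w where "w = rinv (d - c * a' * b)"
  have w1: "(d - c * a' * b) * w = 1" and w2: "w * (d - c * a' * b) = 1" using runitD[OF u] w_def by auto
  have aa: "a * (a' * x) = x" "a' * (a * x) = x" for x using a by (simp_all add: mult.assoc[symmetric])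
  let ?p = "a' + a' * b * w * c * a'" and ?q = "- (a' * b * w)" and ?r = "- (w * c * a')" and ?s = w
  have "a * ?p + b * ?r = 1" using a by (simp add: algebra_simps mult.assoc aa)
  moreover have "a * ?q + b * ?s = 0" by (simp add: algebra_simps mult.assoc aa)
  moreover have "c * ?p + d * ?r = 0"
  proof -
    have "c * ?p + d * ?r = c * a' - (d - c * a' * b) * w * c * a'" by (simp add: algebra_simps mult.assoc)
    also have "\<dots> = 0" using w1 by simp
    finally show ?thesis .
  qed
  moreover have "c * ?q + d * ?s = 1"
  proof -
    have "c * ?q + d * ?s = (d - c * a' * b) * w" by (simp add: algebra_simps mult.assoc)
    then show ?thesis using w1 by simp
  qed
  moreover have "?p * a + ?q * c = 1" using a by (simp add: algebra_simps mult.assoc aa)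
  moreover have "?p * b + ?q * d = 0"
  proof -
    have "?p * b + ?q * d = a' * b - a' * b * (w * (d - c * a' * b))" by (simp add: algebra_simps mult.assoc)
    also have "\<dots> = 0" using w2 by simp
    finally show ?thesis .
  qed
  moreover have "?r * a + ?s * c = 0" using a by (simp add: algebra_simps mult.assoc aa)
  moreover have "?r * b + ?s * d = 1"
  proof -
    have "?r * b + ?s * d = w * (d - c * a' * b)" by (simp add: algebra_simps mult.assoc)
    then show ?thesis using w2 by simp
  qed
  ultimately show ?thesis unfolding inv2_def by blast
qed

lemma inv2_entrywise:
  assumes ua: "is_runit a" and ub: "is_runit b" and uc: "is_runit c" and ud: "is_runit d" and i: "inv2 a b c d"
  shows "inv2 (rinv a) (rinv c) (rinv b) (rinv d)"
proof -
  have "is_runit (a - b * rinv d * c)"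
    using schur2_imp[OF runitD[OF ud] inv2_swap[OF i]] .
  then have "is_runit (rinv b * (b * rinv d * c - a) * rinv c)"
    using runit_mult runit_neg runit_rinv ub uc by (metis minus_diff_eq)
  moreover have "rinv b * (b * rinv d * c - a) * rinv c = rinv d - rinv b * a * rinv c"
  proof -
    have bb: "rinv b * (b * x) = x" for x using runitD[OF ub] by (simp add: mult.assoc[symmetric])
    have "rinv b * (b * rinv d * c - a) * rinv c = rinv b * (b * rinv d * c) * rinv c - rinv b * a * rinv c"
      by (simp add: right_diff_distrib left_diff_distrib)
    also have "rinv b * (b * rinv d * c) * rinv c = rinv d"
      using runitD[OF uc] by (simp add: mult.assoc bb)
    finally show ?thesis .
  qed
  ultimately have "is_runit (rinv d - rinv b * a * rinv c)" by simp
  then show ?thesis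
    using schur2_rev[of "rinv a" a] runitD[OF ua] by simp
qed



definition J2m :: "'a::ring_1 mat3 \<Rightarrow> 'a mat3" where
  "J2m M = (\<chi> j k. rinv (M $ k $ j))"

definition assi' :: "'a::ring_1 mat3 \<Rightarrow> bool" where
  "assi' M \<longleftrightarrow> (\<forall>I J. card I = card J \<longrightarrow> submatrix_invertible M I J)"

lemma J2_Some: "M \<in> Mstar3 \<Longrightarrow> J2 M = Some (J2m M)"
  by (simp add: J2_def J2m_def)

lemma J2_None: "M \<notin> Mstar3 \<Longrightarrow> J2 M = None"
  by (simp add: J2_def)

lemma inv_props: assumes "invertible (M::'a::ring_1 mat3)"
  shows "M ** matrix_inv M = mat 1" "matrix_inv M ** M = mat 1"
proof -
  have "\<exists>A'. M ** A' = mat 1 \<and> A' ** M = mat 1" using assms unfolding invertible_def by blast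
  then have "M ** matrix_inv M = mat 1 \<and> matrix_inv M ** M = mat 1"
    unfolding matrix_inv_def by (rule someI_ex)
  then show "M ** matrix_inv M = mat 1" "matrix_inv M ** M = mat 1" by auto
qed

lemma invertible_inv: "invertible (M::'a::ring_1 mat3) \<Longrightarrow> invertible (matrix_inv M)"
  using inv_props unfolding invertible_def by blast

lemma sub_empty: "submatrix_invertible M {} {}"
  unfolding submatrix_invertible_def by simp

lemma sub_single: "submatrix_invertible M {i} {j} \<longleftrightarrow> is_runit (M $ i $ j)"
  unfolding submatrix_invertible_def is_runit_def
proof
  assume "\<exists>N. (\<forall>ia\<in>{i}. \<forall>i'\<in>{i}. (\<Sum>ja\<in>{j}. M $ ia $ ja * N ja i') = (if ia = i' then 1 else 0)) \<and>
        (\<forall>ja\<in>{j}. \<forall>j'\<in>{j}. (\<Sum>ia\<in>{i}. N ja ia * M $ ia $ j') = (if ja = j' then 1 else 0))"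
  then show "\<exists>b. M $ i $ j * b = 1 \<and> b * M $ i $ j = 1" by auto
next
  assume "\<exists>b. M $ i $ j * b = 1 \<and> b * M $ i $ j = 1"
  then obtain b where "M $ i $ j * b = 1 \<and> b * M $ i $ j = 1" by blast
  then show "\<exists>N. (\<forall>ia\<in>{i}. \<forall>i'\<in>{i}. (\<Sum>ja\<in>{j}. M $ ia $ ja * N ja i') = (if ia = i' then 1 else 0)) \<and>
        (\<forall>ja\<in>{j}. \<forall>j'\<in>{j}. (\<Sum>ia\<in>{i}. N ja ia * M $ ia $ j') = (if ja = j' then 1 else 0))"
    by (intro exI[of _ "\<lambda>_ _. b"]) auto
qed

lemma sub_full: "submatrix_invertible (M::'a::ring_1 mat3) UNIV UNIV \<longleftrightarrow> invertible M"
proof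
  assume "submatrix_invertible M UNIV UNIV"
  then obtain N where N: "\<forall>i i'. (\<Sum>j\<in>UNIV. M $ i $ j * N j i') = (if i = i' then 1 else 0)"
     "\<forall>j j'. (\<Sum>i\<in>UNIV. N j i * M $ i $ j') = (if j = j' then 1 else 0)"
    unfolding submatrix_invertible_def by blast
  have "M ** (\<chi> j i. N j i) = mat 1" "(\<chi> j i. N j i) ** M = mat 1"
    using N by (simp_all add: matrix_matrix_mult_def mat_def vec_eq_iff)
  then show "invertible M" unfolding invertible_def by blast
next
  assume "invertible M"
  then obtain A where A: "M ** A = mat 1" "A ** M = mat 1" unfolding invertible_def by blast
  have "(M ** A) $ i $ i' = mat 1 $ i $ i'" "(A ** M) $ i $ i' = mat 1 $ i $ i'" for i i' using A by simp_all
  then show "submatrix_invertible M UNIV UNIV"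
    unfolding submatrix_invertible_def
    by (intro exI[of _ "\<lambda>j i. A $ j $ i"]) (simp add: matrix_matrix_mult_def mat_def)
qed

lemma sub_compl:
  fixes A B :: "'a::ring_1 mat3"
  assumes AB: "A ** B = mat 1" and BA: "B ** A = mat 1" and s: "submatrix_invertible A I J"
  shows "submatrix_invertible B (-J) (-I)"
proof -
  obtain X where X: "\<forall>i\<in>I. \<forall>i'\<in>I. (\<Sum>j\<in>J. A $ i $ j * X j i') = (if i = i' then 1 else 0)"
        "\<forall>j\<in>J. \<forall>j'\<in>J. (\<Sum>i\<in>I. X j i * A $ i $ j') = (if j = j' then 1 else 0)"
    using s unfolding submatrix_invertible_def by blast
  have "(A ** B) $ i $ i' = mat 1 $ i $ i'" "(B ** A) $ j $ j' = mat 1 $ j $ j'" for i i' j j'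
    using AB BA by simp_all
  then have MN: "\<And>i i'. (\<Sum>j\<in>UNIV. A $ i $ j * B $ j $ i') = (if i = i' then 1 else 0)"
    and NM: "\<And>j j'. (\<Sum>i\<in>UNIV. B $ j $ i * A $ i $ j') = (if j = j' then 1 else 0)"
    by (simp_all add: matrix_matrix_mult_def mat_def)
  from schur_gen[where M="\<lambda>i j. A $ i $ j" and N="\<lambda>j i. B $ j $ i" and I=I and J=J and X=X, OF MN NM] X
  show ?thesis unfolding submatrix_invertible_def by blast
qed

lemma sub_2x2:
  assumes "i1 \<noteq> i2" "j1 \<noteq> j2"
  shows "submatrix_invertible M {i1, i2} {j1, j2} \<longleftrightarrow>
         inv2 (M $ i1 $ j1) (M $ i1 $ j2) (M $ i2 $ j1) (M $ i2 $ j2)"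
proof
  assume "submatrix_invertible M {i1, i2} {j1, j2}"
  then obtain N where N: "\<forall>i\<in>{i1,i2}. \<forall>i'\<in>{i1,i2}. (\<Sum>j\<in>{j1,j2}. M $ i $ j * N j i') = (if i = i' then 1 else 0)"
        "\<forall>j\<in>{j1,j2}. \<forall>j'\<in>{j1,j2}. (\<Sum>i\<in>{i1,i2}. N j i * M $ i $ j') = (if j = j' then 1 else 0)"
    unfolding submatrix_invertible_def by blast
  show "inv2 (M $ i1 $ j1) (M $ i1 $ j2) (M $ i2 $ j1) (M $ i2 $ j2)"
    unfolding inv2_def
    apply (rule exI[of _ "N j1 i1"], rule exI[of _ "N j1 i2"], rule exI[of _ "N j2 i1"], rule exI[of _ "N j2 i2"])
    using N assms by auto
next
  assume "inv2 (M $ i1 $ j1) (M $ i1 $ j2) (M $ i2 $ j1) (M $ i2 $ j2)"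
  then obtain p q r s where e: "M $ i1 $ j1 * p + M $ i1 $ j2 * r = 1" "M $ i1 $ j1 * q + M $ i1 $ j2 * s = 0"
     "M $ i2 $ j1 * p + M $ i2 $ j2 * r = 0" "M $ i2 $ j1 * q + M $ i2 $ j2 * s = 1"
     "p * M $ i1 $ j1 + q * M $ i2 $ j1 = 1" "p * M $ i1 $ j2 + q * M $ i2 $ j2 = 0"
     "r * M $ i1 $ j1 + s * M $ i2 $ j1 = 0" "r * M $ i1 $ j2 + s * M $ i2 $ j2 = 1"
    unfolding inv2_def by blast
  show "submatrix_invertible M {i1, i2} {j1, j2}"
    unfolding submatrix_invertible_def
    apply (rule exI[of _ "\<lambda>j i. if j = j1 then (if i = i1 then p else q) else (if i = i1 then r else s)"])
    using e assms by auto
qed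

lemma card3_cases:
  fixes I :: "3 set"
  obtains "I = {}" | i where "I = {i}" | x y where "I = {x, y}" "x \<noteq> y" | "I = UNIV"
proof -
  have c3: "CARD(3) = 3" by simp
  have "card I \<le> CARD(3)" by (rule card_mono) auto
  then have "card I \<le> 3" by (simp only: c3)
  then consider "card I = 0" | "card I = 1" | "card I = 2" | "card I = 3" by linarith
  then show ?thesis
  proof cases
    case 1 then have "I = {}" by simp
    then show ?thesis by (rule that(1))
  next
    case 2 then obtain i where "I = {i}" by (rule card_1_singletonE)
    then show ?thesis by (rule that(2))
  next
    case 3 then obtain x y where "I = {x, y}" "x \<noteq> y" unfolding card_2_iff by blast
    then show ?thesis by (rule that(3))
  next
    case 4 then have "card I = CARD(3)" by (simp only: c3)
    then have "I = UNIV" by (intro card_eq_UNIV_imp_eq_UNIV) auto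
    then show ?thesis by (rule that(4))
  qed
qed

lemma card_compl3: "card (- (I :: 3 set)) = 3 - card I"
  by (simp add: Compl_eq_Diff_UNIV card_Diff_subset)

lemma assi_iff: "all_square_submatrices_invertible M \<longleftrightarrow> assi' M"
  unfolding all_square_submatrices_invertible_def assi'_def
proof (intro iffI allI impI)
  fix I J :: "3 set"
  assume h: "\<forall>I J. I \<noteq> {} \<and> card I = card J \<longrightarrow> submatrix_invertible M I J" and c: "card I = card J"
  show "submatrix_invertible M I J"
  proof (cases "I = {}")
    case True
    then have "card J = 0" using c by simp
    then have "J = {}" by simp
    then show ?thesis using True sub_empty by simp
  next
    case False then show ?thesis using h c by blast
  qed
next
  fix I J :: "3 set"
  assume "\<forall>I J. card I = card J \<longrightarrow> submatrix_invertible M I J" "I \<noteq> {} \<and> card I = card J"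
  then show "submatrix_invertible M I J" by blast
qed

lemma assi'_Mstar: assumes "assi' M" shows "M \<in> Mstar3"
  unfolding Mstar3_def
proof (intro CollectI allI)
  fix j k :: 3
  have "card {j} = card {k}" by simp
  then have "submatrix_invertible M {j} {k}" using assms unfolding assi'_def by blast
  then show "is_runit (M $ j $ k)" using sub_single by blast
qed

lemma assi'_inv: "assi' M \<Longrightarrow> invertible M"
  unfolding assi'_def using sub_full by blast

lemma assi'_matrix_inv: assumes "assi' M" shows "assi' (matrix_inv M)"
proof -
  have inv: "invertible M" using assi'_inv assms by blast
  show ?thesis unfolding assi'_def
  proof (intro allI impI)
    fix I J :: "3 set" assume c: "card I = card J"
    have "card (-J) = card (-I)" using c card_compl3 by metis
    then have "submatrix_invertible M (-J) (-I)" using assms unfolding assi'_def by blast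
    from sub_compl[OF inv_props[OF inv] this] show "submatrix_invertible (matrix_inv M) I J" by simp
  qed
qed

lemma assi'_iff: "assi' (M::'a::ring_1 mat3) \<longleftrightarrow> invertible M \<and> M \<in> Mstar3 \<and> matrix_inv M \<in> Mstar3"
proof
  assume "assi' M" then show "invertible M \<and> M \<in> Mstar3 \<and> matrix_inv M \<in> Mstar3"
    using assi'_inv assi'_Mstar assi'_matrix_inv by blast
next
  assume h: "invertible M \<and> M \<in> Mstar3 \<and> matrix_inv M \<in> Mstar3"
  show "assi' M" unfolding assi'_def
  proof (intro allI impI)
    fix I J :: "3 set" assume c: "card I = card J"
    show "submatrix_invertible M I J"
    proof (cases I rule: card3_cases)
      case 1 then have "card J = 0" using c by simp
      then have "J = {}" by simp
      then show ?thesis using 1 sub_empty by simp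
    next
      case (2 i)
      then have "card J = 1" using c by simp
      then obtain j where "J = {j}" by (rule card_1_singletonE)
      then show ?thesis using 2 h sub_single unfolding Mstar3_def by blast
    next
      case (3 x y)
      have "card (-I) = 1" using 3 card_compl3[of I] by simp
      moreover have "card (-J) = 1" using 3 c card_compl3[of J] by simp
      ultimately obtain i j where ij: "-I = {i}" "-J = {j}" by (meson card_1_singletonE)
      have "submatrix_invertible (matrix_inv M) {j} {i}" using h sub_single unfolding Mstar3_def by blast
      from sub_compl[OF inv_props(2,1)[OF conjunct1[OF h]] this] ij
      show ?thesis by (metis double_compl)
    next
      case 4
      then have "J = UNIV" using c card_eq_UNIV_imp_eq_UNIV[of J] by simp
      then show ?thesis using 4 h sub_full by blast
    qed
  qed
qed

lemma SS_iff: "M \<in> SS \<longleftrightarrow> assi' M \<and> invertible (J2m M)"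
proof
  assume "M \<in> SS"
  then obtain N where a: "all_square_submatrices_invertible M" and N: "J2 M = Some N" "invertible N"
    unfolding SS_def by blast
  have "M \<in> Mstar3" using N(1) J2_None by fastforce
  then have "J2 M = Some (J2m M)" by (rule J2_Some)
  then have "N = J2m M" using N(1) by simp
  then show "assi' M \<and> invertible (J2m M)" using a N(2) assi_iff by blast
next
  assume h: "assi' M \<and> invertible (J2m M)"
  then have "J2 M = Some (J2m M)" using assi'_Mstar J2_Some by blast
  then show "M \<in> SS" unfolding SS_def using h assi_iff by blast
qed

lemma J2m_J2m: "M \<in> Mstar3 \<Longrightarrow> J2m (J2m M) = M"
  by (simp add: J2m_def Mstar3_def rinv_rinv vec_eq_iff)

lemma J2m_Mstar: "M \<in> Mstar3 \<Longrightarrow> J2m M \<in> Mstar3"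
  by (simp add: J2m_def Mstar3_def runit_rinv)

lemma claim1: assumes "M \<in> SS" shows "J2 M = Some (J2m M) \<and> J2m M \<in> SS"
proof -
  have a: "assi' M" and iv: "invertible (J2m M)" using assms SS_iff by blast+
  have ms: "M \<in> Mstar3" using a assi'_Mstar by blast
  have "assi' (J2m M)" unfolding assi'_def
  proof (intro allI impI)
    fix I J :: "3 set" assume c: "card I = card J"
    show "submatrix_invertible (J2m M) I J"
    proof (cases I rule: card3_cases)
      case 1 then have "card J = 0" using c by simp
      then have "J = {}" by simp
      then show ?thesis using 1 sub_empty by simp
    next
      case (2 i)
      then have "card J = 1" using c by simp
      then obtain j where "J = {j}" by (rule card_1_singletonE)
      moreover have "is_runit (J2m M $ i $ j)" using J2m_Mstar[OF ms] unfolding Mstar3_def by blast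
      ultimately show ?thesis using 2 by (simp add: sub_single)
    next
      case (3 i1 i2)
      then have "card J = 2" using c by simp
      then obtain j1 j2 where J: "J = {j1, j2}" "j1 \<noteq> j2" unfolding card_2_iff by blast
      have "card {j1, j2} = card {i1, i2}" using J 3 by simp
      then have "submatrix_invertible M {j1, j2} {i1, i2}" using a unfolding assi'_def by blast
      then have "inv2 (M $ j1 $ i1) (M $ j1 $ i2) (M $ j2 $ i1) (M $ j2 $ i2)"
        using sub_2x2[OF J(2) 3(2), of M] by simp
      moreover have "\<And>j k. is_runit (M $ j $ k)" using ms unfolding Mstar3_def by blast
      ultimately have "inv2 (rinv (M $ j1 $ i1)) (rinv (M $ j2 $ i1)) (rinv (M $ j1 $ i2)) (rinv (M $ j2 $ i2))"
        by (intro inv2_entrywise)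
      then show ?thesis using sub_2x2[of i1 i2 j1 j2 "J2m M"] 3 J by (simp add: J2m_def)
    next
      case 4
      then have "J = UNIV" using c card_eq_UNIV_imp_eq_UNIV[of J] by simp
      then show ?thesis using 4 iv sub_full by blast
    qed
  qed
  moreover have "invertible (J2m (J2m M))" using J2m_J2m[OF ms] a assi'_inv by simp
  ultimately show ?thesis using SS_iff J2_Some ms by blast
qed

lemma dom_JJ: "M \<in> dom JJ \<longleftrightarrow> invertible M \<and> matrix_inv M \<in> Mstar3"
  by (auto simp: JJ_def map_comp_def J1_def Minv3_def J2_def split: option.splits if_splits)

lemma dom_JJinv: "M \<in> dom JJinv \<longleftrightarrow> M \<in> Mstar3 \<and> invertible (J2m M)"
  by (auto simp: JJinv_def map_comp_def J1_def Minv3_def J2_def J2m_def split: option.splits if_splits)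

lemma JJinv_val: "M \<in> Mstar3 \<Longrightarrow> invertible (J2m M) \<Longrightarrow> JJinv M = Some (matrix_inv (J2m M))"
  by (simp add: JJinv_def map_comp_def J1_def Minv3_def J2_Some)

lemma claim3: "dom (JJ :: 'a::ring_1 mat3 \<Rightarrow> 'a mat3 option) \<inter> dom JJinv = SS"
  using dom_JJ dom_JJinv SS_iff assi'_iff by blast

lemma LamL_Mstar: "A \<in> Mstar3 \<Longrightarrow> LamL A \<in> Mstar3"
  unfolding Mstar3_def LamL_def by (simp add: runit_mult runit_rinv)

theorem lemma8:
  shows "(\<forall>M :: 'a::ring_1 mat3. M \<in> SS \<longrightarrow> (\<exists>N. J2 M = Some N \<and> N \<in> SS)) \<and>
         (\<forall>M :: 'a mat3. M \<in> SS \<longrightarrow> all_square_submatrices_invertible (matrix_inv M)) \<and>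
         dom (JJ :: 'a mat3 \<Rightarrow> 'a mat3 option) \<inter> dom JJinv = SS \<and>
         dom (Phi :: 'a mat3 \<Rightarrow> 'a mat3 option) \<inter> dom Phiinv = SShat"
proof (intro conjI)
  show "\<forall>M :: 'a::ring_1 mat3. M \<in> SS \<longrightarrow> (\<exists>N. J2 M = Some N \<and> N \<in> SS)"
    using claim1 by blast
  show "\<forall>M :: 'a mat3. M \<in> SS \<longrightarrow> all_square_submatrices_invertible (matrix_inv M)"
    using SS_iff assi'_matrix_inv assi_iff by blast
  show "dom (JJ :: 'a mat3 \<Rightarrow> 'a mat3 option) \<inter> dom JJinv = SS" by (rule claim3)
  show "dom (Phi :: 'a mat3 \<Rightarrow> 'a mat3 option) \<inter> dom Phiinv = SShat"
  proof (intro set_eqI iffI)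
    fix A :: "'a mat3" assume "A \<in> dom Phi \<inter> dom Phiinv"
    then have "A \<in> dom JJ" "A \<in> dom JJinv" "A \<in> Mhat3"
      by (auto simp: Phi_def Phiinv_def split: if_splits)
    then show "A \<in> SShat" using claim3 unfolding SShat_def by blast
  next
    fix A :: "'a mat3" assume "A \<in> SShat"
    then have S: "A \<in> SS" and H: "A \<in> Mhat3" unfolding SShat_def by auto
    have dJ: "A \<in> dom JJ" and dJi: "A \<in> dom JJinv" using S claim3 by blast+
    have ms: "A \<in> Mstar3" and ij: "invertible (J2m A)" using dJi dom_JJinv by blast+
    have "matrix_inv A \<in> Mstar3" using dJ dom_JJ by blast
    then have "LamL (matrix_inv A) \<in> Mstar3" by (rule LamL_Mstar)
    then have "A \<in> dom Phi" using dJ H ms by (simp add: Phi_def J2_Some dom_def)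
    moreover have "J2m A \<in> SS" using claim1 S by blast
    then have "matrix_inv (J2m A) \<in> Mstar3" using claim3 dom_JJ by blast
    then have "A \<in> dom Phiinv" using H dJi JJinv_val[OF ms ij] by (simp add: Phiinv_def dom_def)
    ultimately show "A \<in> dom Phi \<inter> dom Phiinv" by blast
  qed
qed

end
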